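(* Let $X$ be a spectrally negative Lévy process, $p\ge0$ and $q\in\mathbb R$ with $p+q\ge0$. Then for all $x\in\mathbb R$, $$\int_0^xW^{(p)}(x-z)\mathcal H^{(p,q)}(z)\,\mathrm dz=\int_0^xe^{\Phi(p)(x-z)}W^{(p+q)}(z)\,\mathrm dz,$$ and consequently, for all $a,x\in\mathbb R$, $$\mathcal H^{(p,q)}(x)-q\int_a^xW^{(p)}(x-y)\mathcal H^{(p,q)}(y)\,\mathrm dy=e^{\Phi(p)x}+q\int_0^aW^{(p)}(x-y)\mathcal H^{(p,q)}(y)\,\mathrm dy.$$
   Context: $X=\{X_t,t\ge0\}$ is a spectrally negative Lévy process (no positive jumps) whose paths are not monotone. Laplace exponent: $\psi(\lambda)=\log\mathbb E_0[e^{\lambda X_1}]$, $\lambda\ge0$; $\Phi(q)=\sup\{\lambda\ge0:\psi(\lambda)=q\}$ for $q\ge0$. For $q\ge0$, the $q$-scale function $W^{(q)}$ is $0$ on $(-\infty,0)$ and on $[0,\infty)$ is the continuous function with $\int_0^\infty e^{-\lambda y}W^{(q)}(y)\,\mathrm dy=1/(\psi(\lambda)-q)$ for $\lambda>\Phi(q)$. For $p\ge0$, $q\in\mathbb R$ with $p+q\ge0$ and $x\in\mathbb R$: $\mathcal H^{(p,q)}(x)=e^{\Phi(p)x}\big[1+q\int_0^xe^{-\Phi(p)z}W^{(p+q)}(z)\,\mathrm dz\big]$. Integrals $\int_u^v$ with $v<u$ are oriented: $\int_u^v=-\int_v^u$. *)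

theory Defs
  imports "HOL-Analysis.Analysis"
begin

text \<open>Spectrally negative Levy processes are described through their Levy-Khintchine
  triplet (gamma, sigma, Lm): the Levy measure Lm lives on the negative half-line and
  integrates min 1 (x^2).  The Laplace exponent psi(lambda) = log E[exp(lambda X_1)] is
  then given for lambda >= 0 by the Levy-Khintchine formula below.\<close>

definition levy_measure_sn :: "real measure \<Rightarrow> bool" where
  "levy_measure_sn Lm \<longleftrightarrow> sets Lm = sets borel \<and> emeasure Lm {0..} = 0 \<and>
     integrable Lm (\<lambda>x. min 1 (x^2))"

definition laplace_exp :: "real \<Rightarrow> real \<Rightarrow> real measure \<Rightarrow> real \<Rightarrow> real" where
  "laplace_exp \<gamma> \<sigma> Lm l = \<gamma> * l + \<sigma>^2 / 2 * l^2 +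
     integral\<^sup>L Lm (\<lambda>x. exp (l * x) - 1 - l * x * indicator {-1<..} x)"

text \<open>Paths are not monotone: the process is not a pure drift (nondecreasing) and not
  a bounded variation process with non-positive drift (nonincreasing).\<close>
definition sn_not_monotone :: "real \<Rightarrow> real \<Rightarrow> real measure \<Rightarrow> bool" where
  "sn_not_monotone \<gamma> \<sigma> Lm \<longleftrightarrow>
     \<sigma> \<noteq> 0 \<or>
     \<not> integrable Lm (\<lambda>x. \<bar>x\<bar> * indicator {-1<..} x) \<or>
     (\<gamma> + integral\<^sup>L Lm (\<lambda>x. \<bar>x\<bar> * indicator {-1<..} x) > 0 \<and> emeasure Lm UNIV \<noteq> 0)"

definition Phi :: "(real \<Rightarrow> real) \<Rightarrow> real \<Rightarrow> real" where
  "Phi \<psi> q = Sup {l. 0 \<le> l \<and> \<psi> l = q}"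

definition is_scale_family :: "(real \<Rightarrow> real) \<Rightarrow> (real \<Rightarrow> real \<Rightarrow> real) \<Rightarrow> bool" where
  "is_scale_family \<psi> W \<longleftrightarrow> (\<forall>q\<ge>0.
     (\<forall>y<0. W q y = 0) \<and> continuous_on {0..} (W q) \<and>
     (\<forall>l>Phi \<psi> q.
        interval_lebesgue_integrable lborel 0 \<infinity> (\<lambda>y. exp (- l * y) * W q y) \<and>
        (LBINT y=0..\<infinity>. exp (- l * y) * W q y) = 1 / (\<psi> l - q)))"

text \<open>Oriented Lebesgue interval integrals (LBINT x=a..b) are used throughout.\<close>
definition HH :: "(real \<Rightarrow> real) \<Rightarrow> (real \<Rightarrow> real \<Rightarrow> real) \<Rightarrow> real \<Rightarrow> real \<Rightarrow> real \<Rightarrow> real" where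
  "HH \<psi> W p q x = exp (Phi \<psi> p * x) *
     (1 + q * (LBINT z=ereal 0..ereal x. exp (- Phi \<psi> p * z) * W (p + q) z))"

end

theory Submission
  imports Defs
begin

lemma set_integrable_lebesgue_lborel:
  fixes f :: "real \<Rightarrow> real"
  assumes "f \<in> borel_measurable borel" "S \<in> sets borel" "set_integrable lebesgue S f"
  shows "set_integrable lborel S f"
proof -
  have m: "(\<lambda>x. indicator S x *\<^sub>R f x) \<in> borel_measurable lborel" using assms by measurable
  show ?thesis using assms(3) integrable_completion[OF m] unfolding set_integrable_def by simp
qed

lemma lap_exp:
  fixes c :: real assumes "c > 0"
  shows "set_integrable lborel {0..} (\<lambda>x. exp (-c*x))"
    and "(LINT x:{0..}|lborel. exp (-c*x)) = 1/c"
proof -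
  have hi: "((\<lambda>x::real. exp (-c*x)) has_integral 1/c) {0..}"
    using has_integral_exp_minus_to_infinity[OF assms, of 0] by simp
  have "(\<lambda>x. exp (-c*x)) absolutely_integrable_on {0..}"
    using hi by (intro nonnegative_absolutely_integrable_1) (auto simp: integrable_on_def)
  then show si: "set_integrable lborel {0..} (\<lambda>x. exp (-c*x))"
    by (intro set_integrable_lebesgue_lborel) auto
  show "(LINT x:{0..}|lborel. exp (-c*x)) = 1/c"
    using set_borel_integral_eq_integral(2)[OF si] hi integral_unique by auto
qed

lemma laplace_conv:
  fixes f g :: "real \<Rightarrow> real" and l :: real
  assumes fm[measurable]: "f \<in> borel_measurable borel" and gm[measurable]: "g \<in> borel_measurable borel"
  and fi: "set_integrable lborel {0..} (\<lambda>x. exp(-l*x) * f x)"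
  and gi: "set_integrable lborel {0..} (\<lambda>x. exp(-l*x) * g x)"
  shows "set_integrable lborel {0..} (\<lambda>x. exp(-l*x) * (LINT z|lborel. indicator {0..x} z * (f (x-z) * g z)))"
   and "(LINT x:{0..}|lborel. exp(-l*x) * (LINT z|lborel. indicator {0..x} z * (f (x-z) * g z)))
        = (LINT x:{0..}|lborel. exp(-l*x)*f x) * (LINT x:{0..}|lborel. exp(-l*x)*g x)"
proof -
  define F where "F u = indicator {0..} u * (exp(-l*u) * f u)" for u
  define G where "G u = indicator {0..} u * (exp(-l*u) * g u)" for u
  have [measurable]: "F \<in> borel_measurable borel" "G \<in> borel_measurable borel"
    unfolding F_def G_def by measurable
  have Fi: "integrable lborel F" using fi unfolding set_integrable_def F_def by simp
  have Gi: "integrable lborel G" using gi unfolding set_integrable_def G_def by simp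
  define K where "K x z = F (x - z) * G z" for x z
  have Km[measurable]: "(\<lambda>(x,z). K x z) \<in> borel_measurable (lborel \<Otimes>\<^sub>M lborel)"
    unfolding K_def by measurable
  have shiftN: "(\<integral>\<^sup>+x. ennreal (norm (F (x - z))) \<partial>lborel) = (\<integral>\<^sup>+x. ennreal (norm (F x)) \<partial>lborel)" for z
    using nn_integral_real_affine[of "\<lambda>x. ennreal (norm (F x))" 1 "-z"] by simp
  have shiftI: "(\<integral>x. F (x - z) \<partial>lborel) = (\<integral>x. F x \<partial>lborel)" for z
    using lborel_integral_real_affine[of 1 F "-z"] by simp
  have "(\<integral>\<^sup>+p. ennreal (norm (case p of (x,z) \<Rightarrow> K x z)) \<partial>(lborel \<Otimes>\<^sub>M lborel))
      = (\<integral>\<^sup>+z. (\<integral>\<^sup>+x. ennreal (norm (K x z)) \<partial>lborel) \<partial>lborel)"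
    by (subst lborel_pair.nn_integral_snd[symmetric]) auto
  also have "\<dots> = (\<integral>\<^sup>+z. (\<integral>\<^sup>+x. ennreal (norm (F (x - z))) \<partial>lborel) * ennreal (norm (G z)) \<partial>lborel)"
    unfolding K_def
    by (intro nn_integral_cong, subst nn_integral_multc[symmetric]) (auto simp: abs_mult ennreal_mult intro!: nn_integral_cong)
  also have "\<dots> = (\<integral>\<^sup>+x. ennreal (norm (F x)) \<partial>lborel) * (\<integral>\<^sup>+z. ennreal (norm (G z)) \<partial>lborel)"
    unfolding shiftN by (subst nn_integral_cmult) auto
  also have "\<dots> < \<infinity>"
    using Fi Gi unfolding integrable_iff_bounded by (simp add: ennreal_mult_less_top)
  finally have Kint: "integrable (lborel \<Otimes>\<^sub>M lborel) (\<lambda>(x,z). K x z)"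
    by (intro integrableI_bounded) auto
  have Kx: "(\<integral>z. K x z \<partial>lborel) = exp(-l*x) * (LINT z|lborel. indicator {0..x} z * (f (x-z) * g z))"
    if "x \<ge> 0" for x
  proof -
    have "K x z = exp(-l*x) * (indicator {0..x} z * (f (x-z) * g z))" for z
      unfolding K_def F_def G_def
      by (auto simp: indicator_def algebra_simps exp_add[symmetric])
    then show ?thesis by simp
  qed
  have Kx2: "(\<integral>z. K x z \<partial>lborel) = indicator {0..} x * (exp(-l*x) * (LINT z|lborel. indicator {0..x} z * (f (x-z) * g z)))" for x
  proof (cases "x \<ge> 0")
    case True then show ?thesis using Kx by simp
  next
    case False
    then have "K x z = 0" for z unfolding K_def F_def G_def by (auto simp: indicator_def)
    then show ?thesis using False by simp
  qed
  have Kz: "(\<integral>x. K x z \<partial>lborel) = (\<integral>x. F x \<partial>lborel) * G z" for z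
    unfolding K_def using shiftI by simp
  have "integrable lborel (\<lambda>x. \<integral>z. K x z \<partial>lborel)"
    using lborel_pair.integrable_fst[OF Kint] .
  then show "set_integrable lborel {0..} (\<lambda>x. exp(-l*x) * (LINT z|lborel. indicator {0..x} z * (f (x-z) * g z)))"
    unfolding set_integrable_def Kx2 by simp
  have "(\<integral>x. (\<integral>z. K x z \<partial>lborel) \<partial>lborel) = (\<integral>z. (\<integral>x. K x z \<partial>lborel) \<partial>lborel)"
    using lborel_pair.Fubini_integral[OF Kint] by simp
  also have "\<dots> = (\<integral>x. F x \<partial>lborel) * (\<integral>z. G z \<partial>lborel)"
    unfolding Kz by simp
  finally show "(LINT x:{0..}|lborel. exp(-l*x) * (LINT z|lborel. indicator {0..x} z * (f (x-z) * g z)))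
        = (LINT x:{0..}|lborel. exp(-l*x)*f x) * (LINT x:{0..}|lborel. exp(-l*x)*g x)"
    unfolding set_lebesgue_integral_def Kx2 F_def G_def by simp
qed

lemma laplace_unique_pos:
  fixes D :: "real \<Rightarrow> real" and l0 y0 :: real
  assumes cont: "continuous_on {0..} D"
  and int: "\<And>n::nat. set_integrable lborel {0..} (\<lambda>x. exp(-(l0+real n)*x) * D x)"
  and zero: "\<And>n::nat. (LINT x:{0..}|lborel. exp(-(l0+real n)*x) * D x) = 0"
  and y0: "y0 > 0" and pos: "D y0 > 0"
  shows False
proof -
  define u where "u y = indicator {0..} y * (exp(-l0*y) * D y)" for y
  have um[measurable]: "u \<in> borel_measurable borel"
  proof -
    have "(\<lambda>y. indicator {0..} y *\<^sub>R (exp(-l0*y) * D y)) \<in> borel_measurable borel"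
      by (intro borel_measurable_continuous_on_indicator continuous_intros cont) auto
    then show ?thesis unfolding u_def by simp
  qed
  have eq: "indicator {0..} y * (exp(-(l0+real n)*y) * D y) = exp(-y)^n * u y" for n y
    unfolding u_def exp_of_nat_mult[symmetric]
    by (simp add: algebra_simps exp_add[symmetric])
  have momI: "integrable lborel (\<lambda>y. exp(-y)^n * u y)" for n
    using int[of n] unfolding set_integrable_def real_scaleR_def eq .
  have mom: "(\<integral>y. exp(-y)^n * u y \<partial>lborel) = 0" for n
    using zero[of n] unfolding set_lebesgue_integral_def real_scaleR_def eq .
  have uI: "integrable lborel u" using momI[of 0] by simp
  have polyI: "integrable lborel (\<lambda>y. P (exp(-y)) * u y)" and poly0: "(\<integral>y. P (exp(-y)) * u y \<partial>lborel) = 0"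
    if Ppoly: "real_polynomial_function P" for P
  proof -
    obtain a N where P: "P = (\<lambda>x. \<Sum>i\<le>N. a i * x^i)"
      using real_polynomial_function_iff_sum[THEN iffD1, OF Ppoly] by (elim exE)
    have e: "P (exp(-y)) * u y = (\<Sum>i\<le>N. a i * (exp(-y)^i * u y))" for y
      unfolding P sum_distrib_right by (simp only: mult.assoc)
    show "integrable lborel (\<lambda>y. P (exp(-y)) * u y)"
      unfolding e by (auto intro!: momI)
    show "(\<integral>y. P (exp(-y)) * u y \<partial>lborel) = 0"
    proof -
      have "(\<integral>y. P (exp(-y)) * u y \<partial>lborel) = (\<Sum>i\<le>N. (\<integral>y. a i * (exp(-y)^i * u y) \<partial>lborel))"
        unfolding e by (rule Bochner_Integration.integral_sum) (auto intro!: momI)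
      also have "\<dots> = 0" by (simp only: integral_mult_right_zero mom) simp
      finally show ?thesis .
    qed
  qed
  obtain d where d: "d > 0" "\<And>x'. x' \<in> {0..} \<Longrightarrow> dist x' y0 < d \<Longrightarrow> dist (D x') (D y0) < D y0"
    using cont y0 pos unfolding continuous_on_iff by (metis atLeast_iff less_imp_le)
  define \<eta> where "\<eta> = min d y0"
  have eta: "\<eta> > 0" "\<eta> \<le> y0" "\<eta> \<le> d" using d y0 by (auto simp: \<eta>_def)
  have Dpos: "D y > 0" if "y0 - \<eta> < y" "y < y0 + \<eta>" for y
  proof -
    have "y \<in> {0..}" using that eta by auto
    moreover have "dist y y0 < d" using that eta by (auto simp: dist_real_def)
    ultimately show ?thesis using d(2)[of y] by (auto simp: dist_real_def)
  qed
  define a where "a = exp(-(y0+\<eta>))"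
  define b where "b = exp(-(y0-\<eta>))"
  define \<phi> where "\<phi> t = max 0 (min (t - a) (b - t))" for t
  have phic: "continuous_on S \<phi>" for S unfolding \<phi>_def by (intro continuous_intros)
  have b1: "b \<le> 1" unfolding b_def using eta by auto
  have phiab: "\<phi> (exp(-y)) > 0 \<longleftrightarrow> (y0 - \<eta> < y \<and> y < y0 + \<eta>)" for y
  proof -
    have "\<phi> (exp(-y)) > 0 \<longleftrightarrow> (a < exp(-y) \<and> exp(-y) < b)" unfolding \<phi>_def by auto
    also have "\<dots> \<longleftrightarrow> (y0 - \<eta> < y \<and> y < y0 + \<eta>)" unfolding a_def b_def by auto
    finally show ?thesis .
  qed
  define v where "v y = \<phi> (exp(-y)) * u y" for y
  have vm[measurable]: "v \<in> borel_measurable borel"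
  proof -
    have "(\<lambda>y. \<phi> (exp(-y))) \<in> borel_measurable borel"
      by (intro borel_measurable_continuous_onI continuous_on_compose2[OF phic[of UNIV]] continuous_intros) auto
    then show ?thesis unfolding v_def by measurable
  qed
  have phibd: "0 \<le> \<phi> (exp(-y)) \<and> \<phi> (exp(-y)) \<le> 1" for y
  proof -
    have "a > 0" "exp(-y) > 0" unfolding a_def by auto
    then show ?thesis unfolding \<phi>_def using b1 by (auto simp: max_def min_def)
  qed
  have vI: "integrable lborel v"
  proof (rule Bochner_Integration.integrable_bound[OF uI])
    show "v \<in> borel_measurable lborel" by simp
    show "AE x in lborel. norm (v x) \<le> norm (u x)"
    proof (rule AE_I2)
      fix x
      have "\<bar>\<phi> (exp (- x))\<bar> \<le> 1" using phibd[of x] by simp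
      then show "norm (v x) \<le> norm (u x)" unfolding v_def
        by (simp add: abs_mult mult_left_le_one_le)
    qed
  qed
  have v0: "(\<integral>y. v y \<partial>lborel) = 0"
  proof -
    have "\<bar>\<integral>y. v y \<partial>lborel\<bar> \<le> e * (\<integral>y. \<bar>u y\<bar> \<partial>lborel)" if e: "e > 0" for e
    proof -
      obtain P where P: "real_polynomial_function P" "\<And>t. t \<in> {0..1} \<Longrightarrow> \<bar>\<phi> t - P t\<bar> < e"
        using Stone_Weierstrass_real_polynomial_function[OF compact_Icc phic e] by blast
      have "(\<integral>y. v y \<partial>lborel) = (\<integral>y. v y - P (exp(-y)) * u y \<partial>lborel)"
        using poly0[OF P(1)] polyI[OF P(1)] vI by simp
      also have "\<dots> = (\<integral>y. (\<phi> (exp(-y)) - P (exp(-y))) * u y \<partial>lborel)"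
        unfolding v_def by (simp add: algebra_simps)
      finally have "\<bar>\<integral>y. v y \<partial>lborel\<bar> = norm (\<integral>y. (\<phi> (exp(-y)) - P (exp(-y))) * u y \<partial>lborel)" by simp
      also have "\<dots> \<le> (\<integral>y. e * \<bar>u y\<bar> \<partial>lborel)"
      proof (rule Bochner_Integration.integral_norm_bound_integral)
        show "integrable lborel (\<lambda>y. (\<phi> (exp (- y)) - P (exp (- y))) * u y)"
          using vI polyI[OF P(1)] unfolding v_def by (simp add: left_diff_distrib)
        show "integrable lborel (\<lambda>y. e * \<bar>u y\<bar>)" using uI by auto
        fix y
        show "norm ((\<phi> (exp (- y)) - P (exp (- y))) * u y) \<le> e * \<bar>u y\<bar>"
        proof (cases "y \<ge> 0")
          case True
          then have "exp(-y) \<in> {0..1}" by auto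
          then have "\<bar>\<phi> (exp(-y)) - P (exp(-y))\<bar> \<le> e" using P(2) by (meson less_imp_le)
          then show ?thesis by (simp add: abs_mult mult_right_mono)
        next
          case False then show ?thesis by (simp add: u_def)
        qed
      qed
      also have "\<dots> = e * (\<integral>y. \<bar>u y\<bar> \<partial>lborel)" by simp
      finally show ?thesis .
    qed
    then show ?thesis
    proof -
      assume H: "\<And>e. e > 0 \<Longrightarrow> \<bar>\<integral>y. v y \<partial>lborel\<bar> \<le> e * (\<integral>y. \<bar>u y\<bar> \<partial>lborel)"
      define A where "A = (\<integral>y. \<bar>u y\<bar> \<partial>lborel)"
      have A0: "A \<ge> 0" unfolding A_def by simp
      show ?thesis
      proof (rule ccontr)
        assume ne: "(\<integral>y. v y \<partial>lborel) \<noteq> 0"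
        let ?c = "\<bar>\<integral>y. v y \<partial>lborel\<bar>"
        have c: "?c > 0" using ne by simp
        have "?c \<le> (?c / (2*(A+1))) * A" using H[of "?c / (2*(A+1))"] c A0 unfolding A_def by simp
        also have "\<dots> = ?c * (A / (2*(A+1)))" by simp
        also have "\<dots> < ?c * 1" using c A0 by (intro mult_strict_left_mono) auto
        also have "\<dots> = ?c" by simp
        finally show False by simp
      qed
    qed
  qed
  have vnn: "0 \<le> v y" for y
  proof (cases "\<phi> (exp(-y)) > 0")
    case True
    then have "y0 - \<eta> < y" "y < y0 + \<eta>" using phiab by auto
    then have "D y > 0" "y \<ge> 0" using Dpos eta by auto
    then show ?thesis using phibd[of y] by (simp add: v_def u_def)
  next
    case False then have "\<phi> (exp(-y)) = 0" using phibd[of y] by simp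
    then show ?thesis by (simp add: v_def)
  qed
  have "AE y in lborel. v y = 0"
    using integral_nonneg_eq_0_iff_AE[OF vI] vnn v0 by auto
  moreover have "v y \<noteq> 0" if "y \<in> {y0-\<eta><..<y0+\<eta>}" for y
  proof -
    have "\<phi> (exp(-y)) > 0" using that phiab by auto
    moreover have "D y > 0" "y \<ge> 0" using that Dpos eta by auto
    ultimately show ?thesis by (simp add: v_def u_def)
  qed
  ultimately have "AE y in lborel. y \<notin> {y0-\<eta><..<y0+\<eta>}" by (auto elim: AE_mp)
  then have "emeasure lborel {y0-\<eta><..<y0+\<eta>} = 0"
    by (subst (asm) AE_iff_measurable[of "{y0-\<eta><..<y0+\<eta>}"]) auto
  then show False using eta by simp
qed

lemma laplace_unique:
  fixes D :: "real \<Rightarrow> real" and l0 y0 :: real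
  assumes cont: "continuous_on {0..} D"
  and int: "\<And>n::nat. set_integrable lborel {0..} (\<lambda>x. exp(-(l0+real n)*x) * D x)"
  and zero: "\<And>n::nat. (LINT x:{0..}|lborel. exp(-(l0+real n)*x) * D x) = 0"
  and y0: "y0 > 0"
  shows "D y0 = 0"
proof (rule ccontr)
  assume "D y0 \<noteq> 0"
  then consider "D y0 > 0" | "(\<lambda>x. - D x) y0 > 0" by fastforce
  then show False
  proof cases
    case 1 then show False using laplace_unique_pos[OF cont int zero y0] by blast
  next
    case 2
    have c: "continuous_on {0..} (\<lambda>x. - D x)" using cont by (intro continuous_intros)
    have i: "set_integrable lborel {0..} (\<lambda>x. exp(-(l0+real n)*x) * (- D x))" for n
      using set_integrable_mult_right[OF int[of n], of "-1"] by simp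
    have z: "(LINT x:{0..}|lborel. exp(-(l0+real n)*x) * (- D x)) = 0" for n
      using zero[of n] set_integral_uminus[OF int[of n]] by simp
    show False using laplace_unique_pos[OF c i z y0 2] .
  qed
qed

lemma conv_cont:
  fixes F :: "real \<Rightarrow> real \<Rightarrow> real"
  assumes cF: "continuous_on UNIV (\<lambda>(x,z). F x z)"
  shows "continuous_on {0..} (\<lambda>x. integral {0..x} (F x))"
  unfolding continuous_on_iff
proof (intro ballI allI impI)
  fix x0 :: real and e :: real
  assume x0: "x0 \<in> {0..}" and e: "e > 0"
  define N where "N = x0 + 1"
  have cF1: "continuous_on S (F x)" for x S
    by (rule continuous_on_compose2[OF cF, of S "\<lambda>z. (x,z)", simplified]) (auto intro: continuous_intros)
  have intF: "F x integrable_on {a..b}" for x a b by (intro integrable_continuous_real cF1)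
  define \<Phi> where "\<Phi> x = integral (cbox 0 N) (\<lambda>t. \<bar>F x t - F x0 t\<bar>)" for x
  have c1: "continuous_on UNIV (\<lambda>p::real\<times>real. F (fst p) (snd p))" using cF by (simp add: case_prod_beta)
  have c2: "continuous_on UNIV (\<lambda>p::real\<times>real. F x0 (snd p))"
  proof -
    have "continuous_on UNIV (\<lambda>p::real\<times>real. (x0, snd p))" by (intro continuous_intros)
    then show ?thesis using continuous_on_compose2[OF c1, of UNIV "\<lambda>p. (x0, snd p)"] by simp
  qed
  have cPhi: "continuous_on UNIV \<Phi>"
    unfolding \<Phi>_def
    by (rule integral_continuous_on_param, unfold case_prod_beta)
       (intro continuous_intros continuous_on_subset[OF c1] continuous_on_subset[OF c2]; simp)
  have Phi0: "\<Phi> x0 = 0" unfolding \<Phi>_def by simp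
  define K where "K x = integral {0..x} (F x0)" for x
  have cK: "continuous_on {0..N} K" unfolding K_def by (intro indefinite_integral_continuous_1 intF)
  obtain d1 where d1: "d1 > 0" "\<And>x. x \<in> {0..N} \<Longrightarrow> dist x x0 < d1 \<Longrightarrow> dist (K x) (K x0) < e/2"
    using cK x0 e unfolding continuous_on_iff N_def
    by (metis atLeastAtMost_iff atLeast_iff half_gt_zero less_add_one less_imp_le)
  obtain d2 where d2: "d2 > 0" "\<And>x. dist x x0 < d2 \<Longrightarrow> dist (\<Phi> x) (\<Phi> x0) < e/2"
    using cPhi e unfolding continuous_on_iff
    by (metis UNIV_I half_gt_zero)
  show "\<exists>d>0. \<forall>x'\<in>{0..}. dist x' x0 < d \<longrightarrow> dist (integral {0..x'} (F x')) (integral {0..x0} (F x0)) < e"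
  proof (intro exI[of _ "min 1 (min d1 d2)"] conjI ballI impI)
    show "min 1 (min d1 d2) > 0" using d1 d2 by auto
    fix x assume x: "x \<in> {0..}" "dist x x0 < min 1 (min d1 d2)"
    then have xN: "x \<in> {0..N}" unfolding N_def by (auto simp: dist_real_def)
    have "integral {0..x} (F x) - integral {0..x} (F x0) = integral {0..x} (\<lambda>t. F x t - F x0 t)"
      by (rule integral_diff[symmetric]) (auto intro: intF)
    also have "norm \<dots> \<le> integral {0..x} (\<lambda>t. \<bar>F x t - F x0 t\<bar>)"
      by (rule integral_norm_bound_integral) (auto intro!: integrable_continuous_real continuous_intros cF1)
    also have "\<dots> \<le> integral {0..N} (\<lambda>t. \<bar>F x t - F x0 t\<bar>)"
      using xN by (intro integral_subset_le) (auto intro!: integrable_continuous_real continuous_intros cF1)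
    also have "\<dots> = \<Phi> x" unfolding \<Phi>_def by simp
    also have "\<dots> < e/2" using d2(2)[of x] x Phi0 by (simp add: dist_real_def)
    finally have 1: "norm (integral {0..x} (F x) - integral {0..x} (F x0)) < e/2" .
    have 2: "norm (K x - K x0) < e/2" using d1(2)[OF xN] x by (simp add: dist_norm)
    have "dist (integral {0..x} (F x)) (integral {0..x0} (F x0))
        = norm ((integral {0..x} (F x) - integral {0..x} (F x0)) + (K x - K x0))"
      unfolding K_def dist_norm by simp
    also have "\<dots> \<le> norm (integral {0..x} (F x) - integral {0..x} (F x0)) + norm (K x - K x0)"
      by (rule norm_triangle_ineq)
    also have "\<dots> < e" using 1 2 by simp
    finally show "dist (integral {0..x} (F x)) (integral {0..x0} (F x0)) < e" .
  qed
qed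

lemma exp_le_quad:
  fixes y :: real assumes "y \<le> 0" shows "exp y \<le> 1 + y + y^2/2"
proof -
  define g where "g t = 1 + t + t^2/2 - exp t" for t :: real
  have "g 0 \<le> g y"
  proof (rule DERIV_nonpos_imp_nonincreasing[OF assms])
    fix t :: real
    have "(g has_real_derivative (1 + t - exp t)) (at t)"
      unfolding g_def by (auto intro!: derivative_eq_intros simp: power2_eq_square)
    moreover have "1 + t - exp t \<le> 0" using exp_ge_add_one_self[of t] by simp
    ultimately show "\<exists>y. (g has_real_derivative y) (at t) \<and> y \<le> 0" by blast
  qed
  then show ?thesis unfolding g_def by simp
qed

lemma sq1: "(x::real) \<le> -1 \<Longrightarrow> 1 \<le> x^2" using power2_ge_1_iff by blast
lemma sq2: "-1 < (x::real) \<Longrightarrow> x < 0 \<Longrightarrow> x^2 \<le> 1" by (simp add: square_le_1)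
lemma sq3: "(x::real) \<le> -d \<Longrightarrow> 0 < d \<Longrightarrow> d^2 \<le> x^2"
  using power_mono[of d "-x" 2] by simp

definition kfun :: "real \<Rightarrow> real \<Rightarrow> real" where
  "kfun l x = exp (l * x) - 1 - l * x * indicator {-1<..} x"

lemma kfun_neg1: "x \<le> -1 \<Longrightarrow> kfun l x = exp (l*x) - 1"
  unfolding kfun_def by (simp add: indicator_def)
lemma kfun_m1: "-1 < x \<Longrightarrow> kfun l x = exp (l*x) - 1 - l*x"
  unfolding kfun_def by (simp add: indicator_def)
lemma exp_facts: "exp (y::real) > 0" "1 + y \<le> exp y" using exp_ge_add_one_self[of y] by auto

lemma kfun_P1:
  assumes "x < 0" "l \<ge> 0" shows "\<bar>kfun l x\<bar> \<le> max 1 (l^2/2) * min 1 (x^2)"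
proof (cases "x \<le> -1")
  case True
  then have "min 1 (x^2) = 1" using sq1 by simp
  moreover have "exp (l*x) \<le> 1" using assms by (auto simp: mult_nonneg_nonpos)
  moreover have "max 1 (l^2/2) \<ge> 1" by simp
  ultimately show ?thesis unfolding kfun_neg1[OF True] using exp_facts(1)[of "l*x"] by linarith
next
  case False
  then have k: "kfun l x = exp (l*x) - 1 - l*x" by (intro kfun_m1) simp
  have "x^2 \<le> 1" using False assms sq2 by simp
  then have mn: "min 1 (x^2) = x^2" by simp
  have lx: "l*x \<le> 0" using assms by (simp add: mult_nonneg_nonpos)
  have "0 \<le> exp (l*x) - 1 - l*x" using exp_facts(2)[of "l*x"] by linarith
  moreover have "exp (l*x) - 1 - l*x \<le> (l*x)^2/2" using exp_le_quad[OF lx] by simp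
  moreover have "(l*x)^2/2 = l^2/2 * x^2" by (simp add: power_mult_distrib)
  moreover have "l^2/2 * x^2 \<le> max 1 (l^2/2) * x^2" by (intro mult_right_mono) auto
  ultimately show ?thesis unfolding k mn by simp
qed

lemma kfun_P2:
  assumes "x < 0" "l \<ge> 0" shows "kfun l x \<ge> - min 1 (x^2)"
proof (cases "x \<le> -1")
  case True
  then have "min 1 (x^2) = 1" using sq1 by simp
  then show ?thesis unfolding kfun_neg1[OF True] using exp_facts(1)[of "l*x"] by linarith
next
  case False
  then have k: "kfun l x = exp (l*x) - 1 - l*x" by (intro kfun_m1) simp
  have "0 \<le> min 1 (x^2)" by simp
  then show ?thesis unfolding k using exp_facts(2)[of "l*x"] by linarith
qed

lemma kfun_P3:
  assumes "x < 0" "0 < \<delta>" "l * \<delta> \<ge> 2" "l \<ge> 0"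
  shows "kfun l x \<ge> l/2 * (\<bar>x\<bar> * indicator {-1<..-\<delta>} x) - min 1 (x^2)"
proof (cases "-1 < x \<and> x \<le> -\<delta>")
  case False
  then have "indicator {-1<..-\<delta>} x = (0::real)" by (simp add: indicator_def)
  then show ?thesis using kfun_P2[OF assms(1,4)] by simp
next
  case True
  then have k: "kfun l x = exp (l*x) - 1 + l*\<bar>x\<bar>" using kfun_m1[of x l] assms by simp
  have "l * \<bar>x\<bar> \<ge> l * \<delta>" using assms True by (intro mult_left_mono) auto
  then have "l * \<bar>x\<bar> \<ge> 2" using assms by linarith
  then have a: "kfun l x \<ge> l/2 * \<bar>x\<bar>" unfolding k using exp_facts(1)[of "l*x"] by linarith
  have b: "0 \<le> min 1 (x^2)" by simp
  have ind: "indicator {-1<..-\<delta>} x = (1::real)" using True by (simp add: indicator_def)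
  show ?thesis unfolding ind using a b by linarith
qed

lemma kfun_P4:
  assumes "x < 0" "0 < \<delta>" "\<delta> \<le> 1" "l \<ge> 0"
  shows "kfun l x \<ge> l * (\<bar>x\<bar> * indicator {-1<..} x) - l * (\<bar>x\<bar> * indicator {-\<delta><..} x) - min 1 (x^2) / \<delta>^2"
proof -
  have d2: "\<delta>^2 > 0" "\<delta>^2 \<le> 1" using assms by (auto simp: power_le_one)
  show ?thesis
  proof (cases "x \<le> -1")
    case True
    then have "min 1 (x^2) = 1" using sq1 by simp
    moreover have "1 / \<delta>^2 \<ge> 1" using d2 by simp
    moreover have i1: "indicator {-\<delta><..} x = (0::real)" "indicator {-1<..} x = (0::real)"
      using True assms by (auto simp: indicator_def)
    ultimately show ?thesis unfolding kfun_neg1[OF True] i1 using exp_facts(1)[of "l*x"] by linarith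
  next
    case False
    then have k: "kfun l x = exp (l*x) - 1 + l*\<bar>x\<bar>" using kfun_m1[of x l] assms by simp
    have i1: "indicator {-1<..} x = (1::real)" using False by simp
    show ?thesis
    proof (cases "x \<le> -\<delta>")
      case True
      have "x^2 \<ge> \<delta>^2" using True assms sq3 by simp
      moreover have "x^2 \<le> 1" using False assms sq2 by simp
      ultimately have "min 1 (x^2) / \<delta>^2 \<ge> 1" using d2 by simp
      moreover have i2: "indicator {-\<delta><..} x = (0::real)" using True by (simp add: indicator_def)
      ultimately show ?thesis unfolding k i1 i2 using exp_facts(1)[of "l*x"] by linarith
    next
      case False
      have "0 \<le> min 1 (x^2) / \<delta>^2" by simp
      moreover have i2: "indicator {-\<delta><..} x = (1::real)" using False by (simp add: indicator_def)
      moreover have "l*\<bar>x\<bar> = -(l*x)" using assms by simp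
      ultimately show ?thesis unfolding k i1 i2 using exp_facts(2)[of "l*x"] by linarith
    qed
  qed
qed

lemma seq_eventually_le:
  fixes x :: real assumes "x < 0"
  shows "\<forall>\<^sub>F n in sequentially. x \<le> - 1 / (real n + 1)"
proof -
  obtain N :: nat where N: "N > 0" "inverse (real N) < -x" using ex_inverse_of_nat_less[of "-x"] assms by auto
  show ?thesis unfolding eventually_sequentially
  proof (intro exI[of _ N] allI impI)
    fix n assume "N \<le> n"
    then have "1 / (real n + 1) \<le> inverse (real N)" using N by (simp add: field_simps)
    then show "x \<le> - 1 / (real n + 1)" using N by simp
  qed
qed

lemma psi_growth:
  fixes c :: real
  assumes Lm: "levy_measure_sn Lm" and nm: "sn_not_monotone \<gamma> \<sigma> Lm"
  shows "\<exists>L. \<forall>l\<ge>L. laplace_exp \<gamma> \<sigma> Lm l > c"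
proof -
  have sLm: "sets Lm = sets borel" and z: "emeasure Lm {0..} = 0" and mI: "integrable Lm (\<lambda>x. min 1 (x^2))"
    using Lm unfolding levy_measure_sn_def by auto
  have meas: "f \<in> borel_measurable Lm" if "f \<in> borel_measurable borel" for f :: "real \<Rightarrow> real"
    using that unfolding measurable_cong_sets[OF sLm refl] .
  have AEneg: "AE x in Lm. x < 0"
  proof -
    have "{0..} \<in> null_sets Lm" using z sLm by (simp add: null_sets_def)
    then have "AE x in Lm. x \<notin> {0..}" by (rule AE_not_in)
    then show ?thesis by eventually_elim auto
  qed
  define M where "M = (\<integral>x. min 1 (x^2) \<partial>Lm)"
  have M0: "M \<ge> 0" unfolding M_def by (intro Bochner_Integration.integral_nonneg) simp
  have psi: "laplace_exp \<gamma> \<sigma> Lm l = \<gamma>*l + \<sigma>^2/2*l^2 + (\<integral>x. kfun l x \<partial>Lm)" for l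
    unfolding laplace_exp_def kfun_def by simp
  have km: "(\<lambda>x. kfun l x) \<in> borel_measurable Lm" for l
    by (rule meas) (unfold kfun_def, measurable)
  have kI: "integrable Lm (\<lambda>x. kfun l x)" if l0: "l \<ge> 0" for l
  proof (rule Bochner_Integration.integrable_bound)
    show "integrable Lm (\<lambda>x. max 1 (l^2/2) * min 1 (x^2))" using mI by simp
    show "(\<lambda>x. kfun l x) \<in> borel_measurable Lm" by (rule km)
    show "AE x in Lm. norm (kfun l x) \<le> norm (max 1 (l^2/2) * min 1 (x^2))"
      using AEneg
    proof eventually_elim
      fix x :: real assume "x < 0"
      have "0 \<le> max 1 (l^2/2) * min 1 (x^2)" by simp
      then show "norm (kfun l x) \<le> norm (max 1 (l^2/2) * min 1 (x^2))"
        using kfun_P1[OF \<open>x < 0\<close> l0] by simp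
    qed
  qed
  have lowM: "(\<integral>x. kfun l x \<partial>Lm) \<ge> -M" if l0: "l \<ge> 0" for l
  proof -
    have "(\<integral>x. - min 1 (x^2) \<partial>Lm) \<le> (\<integral>x. kfun l x \<partial>Lm)"
      by (rule integral_mono_AE) (use mI kI[OF l0] AEneg kfun_P2[OF _ l0] in \<open>auto elim: AE_mp\<close>)
    then show ?thesis unfolding M_def by simp
  qed
  have final: "\<exists>L. \<forall>l\<ge>L. laplace_exp \<gamma> \<sigma> Lm l > c"
    if L1: "\<And>l. l \<ge> Lz \<Longrightarrow> laplace_exp \<gamma> \<sigma> Lm l \<ge> a * l - B" and a: "a > 0" for a B Lz
  proof -
    define L where "L = max Lz ((\<bar>c\<bar> + \<bar>B\<bar> + 1) / a)"
    show ?thesis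
    proof (intro exI[of _ L] allI impI)
      fix l assume l: "l \<ge> L"
      then have "(\<bar>c\<bar> + \<bar>B\<bar> + 1) / a \<le> l" unfolding L_def by simp
      then have "\<bar>c\<bar> + \<bar>B\<bar> + 1 \<le> a * l" using a by (simp add: pos_divide_le_eq mult.commute)
      moreover have "laplace_exp \<gamma> \<sigma> Lm l \<ge> a * l - B" using L1 l unfolding L_def by simp
      ultimately show "laplace_exp \<gamma> \<sigma> Lm l > c" by linarith
    qed
  qed
  consider (s) "\<sigma> \<noteq> 0" | (ubv) "\<not> integrable Lm (\<lambda>x. \<bar>x\<bar> * indicator {-1<..} x)"
    | (bv) "integrable Lm (\<lambda>x. \<bar>x\<bar> * indicator {-1<..} x)" "\<gamma> + (\<integral>x. \<bar>x\<bar> * indicator {-1<..} x \<partial>Lm) > 0"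
    using nm unfolding sn_not_monotone_def by auto
  then show ?thesis
  proof cases
    case s
    define s where "s = \<sigma>^2/2"
    have s0: "s > 0" using s unfolding s_def by simp
    have L1: "laplace_exp \<gamma> \<sigma> Lm l \<ge> 1 * l - M" if l: "l \<ge> max 1 ((\<bar>\<gamma>\<bar> + 1) / s)" for l
    proof -
      have l1: "l \<ge> 1" using l by simp
      have "(\<bar>\<gamma>\<bar> + 1) / s \<le> l" using l by simp
      then have "\<bar>\<gamma>\<bar> + 1 \<le> s * l" using s0 by (simp add: pos_divide_le_eq mult.commute)
      then have "(\<bar>\<gamma>\<bar> + 1) * l \<le> (s * l) * l" using l1 by (intro mult_right_mono) auto
      then have "(\<bar>\<gamma>\<bar> + 1) * l \<le> s * l^2" by (simp add: power2_eq_square mult.assoc)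
      moreover have "\<gamma> * l \<ge> - \<bar>\<gamma>\<bar> * l" using mult_right_mono[of "-\<bar>\<gamma>\<bar>" \<gamma> l] l1 by simp
      moreover have "(\<integral>x. kfun l x \<partial>Lm) \<ge> -M" using lowM l1 by simp
      ultimately show "laplace_exp \<gamma> \<sigma> Lm l \<ge> 1 * l - M" unfolding psi s_def by (simp add: algebra_simps)
    qed
    show ?thesis using final[where a=1 and B=M and Lz="max 1 ((\<bar>\<gamma>\<bar> + 1) / s)", OF L1] by simp
  next
    case ubv
    define K where "K = 2 * (\<bar>\<gamma>\<bar> + 1)"
    define A where "A \<delta> = (\<integral>x. \<bar>x\<bar> * indicator {-1<..-\<delta>} x \<partial>Lm)" for \<delta>
    have bI: "integrable Lm (\<lambda>x. \<bar>x\<bar> * indicator {-1<..-\<delta>} x)" if d: "0<\<delta>" "\<delta>\<le>1" for \<delta>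
    proof (rule Bochner_Integration.integrable_bound)
      show "integrable Lm (\<lambda>x. min 1 (x^2) / \<delta>)" using mI by simp
      show "(\<lambda>x. \<bar>x\<bar> * indicator {-1<..-\<delta>} x) \<in> borel_measurable Lm" by (rule meas) measurable
      show "AE x in Lm. norm (\<bar>x\<bar> * indicator {-1<..-\<delta>} x) \<le> norm (min 1 (x^2) / \<delta>)"
      proof (rule AE_I2)
        fix x :: real
        show "norm (\<bar>x\<bar> * indicator {-1<..-\<delta>} x) \<le> norm (min 1 (x^2) / \<delta>)"
        proof (cases "-1 < x \<and> x \<le> -\<delta>")
          case True
          then have "x^2 \<le> 1" using sq2[of x] d by simp
          moreover have "\<delta> * \<bar>x\<bar> \<le> \<bar>x\<bar> * \<bar>x\<bar>" using True d by (intro mult_right_mono) auto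
          ultimately have "\<bar>x\<bar> \<le> x^2 / \<delta>" using d by (simp add: field_simps power2_eq_square)
          then show ?thesis using True \<open>x^2 \<le> 1\<close> d by (simp add: indicator_def)
        next
          case False then have "indicator {-1<..-\<delta>} x = (0::real)" by (simp add: indicator_def)
          then show ?thesis by simp
        qed
      qed
    qed
    have ex\<delta>: "\<exists>\<delta>. 0<\<delta> \<and> \<delta>\<le>1 \<and> A \<delta> \<ge> K"
    proof (rule ccontr)
      assume "\<not> ?thesis"
      then have lt: "\<And>\<delta>. 0<\<delta> \<Longrightarrow> \<delta>\<le>1 \<Longrightarrow> A \<delta> < K" by force
      define f where "f n x = \<bar>x\<bar> * indicator {-1<..-(1/(real n+1))} x" for n x
      define u where "u x = \<bar>x\<bar> * indicator {-1<..<0::real} x" for x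
      have dn: "0 < 1/(real n+1)" "1/(real n+1) \<le> 1" for n by (auto simp: field_simps)
      have fI: "integrable Lm (f n)" for n unfolding f_def using bI[OF dn] .
      have fmono: "f n x \<le> f m x" if "n \<le> m" for n m x
      proof -
        have "1/(real m+1) \<le> 1/(real n+1)" using that by (simp add: field_simps)
        then show ?thesis unfolding f_def by (auto simp: indicator_def)
      qed
      have AEmono: "AE x in Lm. mono (\<lambda>n. f n x)" by (intro AE_I2) (auto simp: mono_def fmono)
      have lim: "AE x in Lm. (\<lambda>n. f n x) \<longlonglongrightarrow> u x"
      proof (rule AE_I2)
        fix x :: real
        show "(\<lambda>n. f n x) \<longlonglongrightarrow> u x"
        proof (cases "-1 < x \<and> x < 0")
          case True
          have "\<forall>\<^sub>F n in sequentially. f n x = u x"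
            using seq_eventually_le[of x] True
            by (auto simp: f_def u_def indicator_def elim!: eventually_mono)
          then show ?thesis by (rule tendsto_eventually)
        next
          case False
          have "f n x = u x" for n
          proof -
            have "0 < 1/(real n+1)" by (simp add: field_simps)
            then have "\<not> (-1 < x \<and> x \<le> -(1/(real n+1)))" using False by linarith
            then show ?thesis using False unfolding f_def u_def by (simp add: indicator_def)
          qed
          then show ?thesis by simp
        qed
      qed
      have incs: "incseq (\<lambda>n. \<integral>x. f n x \<partial>Lm)"
        by (intro monoI integral_mono fI fmono)
      have bdd: "\<forall>n. (\<integral>x. f n x \<partial>Lm) \<le> K"
        using lt[OF dn] unfolding A_def f_def by (auto intro: less_imp_le)
      obtain Lim where Lim: "(\<lambda>n. \<integral>x. f n x \<partial>Lm) \<longlonglongrightarrow> Lim" using incseq_convergent[OF incs bdd] by blast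
      have um: "u \<in> borel_measurable Lm" unfolding u_def by (rule meas) measurable
      have uI: "integrable Lm u" by (rule integrable_monotone_convergence[OF fI AEmono lim Lim um])
      have "integrable Lm u = integrable Lm (\<lambda>x. \<bar>x\<bar> * indicator {-1<..} x)"
      proof (rule integrable_cong_AE)
        show "u \<in> borel_measurable Lm" by (rule um)
        show "(\<lambda>x. \<bar>x\<bar> * indicator {-1<..} x) \<in> borel_measurable Lm" by (rule meas) measurable
        show "AE x in Lm. u x = \<bar>x\<bar> * indicator {-1<..} x"
          using AEneg by eventually_elim (auto simp: u_def indicator_def)
      qed
      with uI ubv show False by simp
    qed
    obtain \<delta> where d: "0<\<delta>" "\<delta>\<le>1" "A \<delta> \<ge> K" using ex\<delta> by blast
    have L1: "laplace_exp \<gamma> \<sigma> Lm l \<ge> 1 * l - M" if l: "l \<ge> max 1 (2/\<delta>)" for l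
    proof -
      have l1: "l \<ge> 1" using l by simp
      have "2/\<delta> \<le> l" using l by simp
      then have ld: "l * \<delta> \<ge> 2" using d by (simp add: pos_divide_le_eq)
      have "(\<integral>x. l/2 * (\<bar>x\<bar> * indicator {-1<..-\<delta>} x) - min 1 (x^2) \<partial>Lm) \<le> (\<integral>x. kfun l x \<partial>Lm)"
      proof (rule integral_mono_AE)
        show "integrable Lm (\<lambda>x. l/2 * (\<bar>x\<bar> * indicator {-1<..-\<delta>} x) - min 1 (x^2))"
          using bI[OF d(1,2)] mI by auto
        show "integrable Lm (\<lambda>x. kfun l x)" using kI l1 by simp
        show "AE x in Lm. l/2 * (\<bar>x\<bar> * indicator {-1<..-\<delta>} x) - min 1 (x^2) \<le> kfun l x"
          using AEneg by eventually_elim (use kfun_P3 d ld l1 in auto)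
      qed
      also have "(\<integral>x. l/2 * (\<bar>x\<bar> * indicator {-1<..-\<delta>} x) - min 1 (x^2) \<partial>Lm) = l/2 * A \<delta> - M"
        unfolding A_def M_def using bI[OF d(1,2)] mI by (simp add: Bochner_Integration.integral_diff)
      finally have i: "l/2 * A \<delta> - M \<le> (\<integral>x. kfun l x \<partial>Lm)" .
      have "l/2 * K \<le> l/2 * A \<delta>" using d l1 by (intro mult_left_mono) auto
      then have f1: "l*\<bar>\<gamma>\<bar> + l \<le> l/2 * A \<delta>" unfolding K_def by (simp add: algebra_simps)
      have f2: "\<gamma> * l \<ge> - (l*\<bar>\<gamma>\<bar>)" using mult_right_mono[of "-\<bar>\<gamma>\<bar>" \<gamma> l] l1 by (simp add: mult.commute)
      have f3: "\<sigma>^2/2*l^2 \<ge> 0" by simp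
      show ?thesis unfolding psi using i f1 f2 f3 by linarith
    qed
    show ?thesis using final[where a=1 and B=M and Lz="max 1 (2/\<delta>)", OF L1] by simp
  next
    case bv
    define w where "w x = \<bar>x\<bar> * indicator {-1<..} x" for x :: real
    define Aint where "Aint = (\<integral>x. w x \<partial>Lm)"
    define d where "d = \<gamma> + Aint"
    have d0: "d > 0" using bv(2) unfolding d_def Aint_def w_def by simp
    have wI: "integrable Lm w" using bv(1) unfolding w_def by simp
    define B where "B \<delta> = (\<integral>x. \<bar>x\<bar> * indicator {-\<delta><..} x \<partial>Lm)" for \<delta>
    have sle: "norm (\<bar>x\<bar> * indicator {-\<delta><..} x) \<le> w x" if "\<delta> \<le> 1" for x \<delta> :: real
      using that unfolding w_def by (auto simp: indicator_def)
    have sI: "integrable Lm (\<lambda>x. \<bar>x\<bar> * indicator {-\<delta><..} x)" if dd: "\<delta> \<le> 1" for \<delta>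
    proof (rule Bochner_Integration.integrable_bound[OF wI])
      show "(\<lambda>x. \<bar>x\<bar> * indicator {-\<delta><..} x) \<in> borel_measurable Lm" by (rule meas) measurable
      show "AE x in Lm. norm (\<bar>x\<bar> * indicator {-\<delta><..} x) \<le> norm (w x)"
      proof (rule AE_I2)
        fix x :: real
        have "norm (\<bar>x\<bar> * indicator {-\<delta><..} x) \<le> w x" by (rule sle[OF dd])
        also have "w x \<le> norm (w x)" by simp
        finally show "norm (\<bar>x\<bar> * indicator {-\<delta><..} x) \<le> norm (w x)" .
      qed
    qed
    have ex\<delta>: "\<exists>\<delta>. 0<\<delta> \<and> \<delta>\<le>1 \<and> B \<delta> \<le> d/2"
    proof -
      define sn where "sn n x = \<bar>x\<bar> * indicator {-(1/(real n+1))<..} x" for n x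
      have dn: "0 < 1/(real n+1)" "1/(real n+1) \<le> 1" for n by (auto simp: field_simps)
      have "(\<lambda>n. \<integral>x. sn n x \<partial>Lm) \<longlonglongrightarrow> (\<integral>x. 0 \<partial>Lm)"
      proof (rule integral_dominated_convergence[where w=w])
        show "(\<lambda>x. 0::real) \<in> borel_measurable Lm" by simp
        show "sn n \<in> borel_measurable Lm" for n unfolding sn_def by (rule meas) measurable
        show "integrable Lm w" by (rule wI)
        show "AE x in Lm. norm (sn n x) \<le> w x" for n
          unfolding sn_def using sle[OF dn(2)[of n]] by (intro AE_I2) simp
        show "AE x in Lm. (\<lambda>n. sn n x) \<longlonglongrightarrow> 0"
          using AEneg
        proof eventually_elim
          fix x :: real assume x: "x < 0"
          have "\<forall>\<^sub>F n in sequentially. sn n x = 0"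
            using seq_eventually_le[OF x] by (rule eventually_mono) (auto simp: sn_def indicator_def)
          then show "(\<lambda>n. sn n x) \<longlonglongrightarrow> 0" by (rule tendsto_eventually)
        qed
      qed
      then have "(\<lambda>n. \<integral>x. sn n x \<partial>Lm) \<longlonglongrightarrow> 0" by simp
      moreover have "d/2 > 0" using d0 by simp
      ultimately have "\<forall>\<^sub>F n in sequentially. (\<integral>x. sn n x \<partial>Lm) < d/2"
        by (rule order_tendstoD)
      then obtain n where "(\<integral>x. sn n x \<partial>Lm) < d/2" by (auto simp: eventually_sequentially)
      then show ?thesis using dn[of n] unfolding B_def sn_def by (intro exI[of _ "1/(real n+1)"]) auto
    qed
    obtain \<delta> where dd: "0<\<delta>" "\<delta>\<le>1" "B \<delta> \<le> d/2" using ex\<delta> by blast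
    define C where "C = M / \<delta>^2"
    have L1: "laplace_exp \<gamma> \<sigma> Lm l \<ge> (d/2) * l - C" if l: "l \<ge> 0" for l
    proof -
      have "(\<integral>x. l * w x - l * (\<bar>x\<bar> * indicator {-\<delta><..} x) - min 1 (x^2) / \<delta>^2 \<partial>Lm) \<le> (\<integral>x. kfun l x \<partial>Lm)"
      proof (rule integral_mono_AE)
        show "integrable Lm (\<lambda>x. l * w x - l * (\<bar>x\<bar> * indicator {-\<delta><..} x) - min 1 (x^2) / \<delta>^2)"
          using wI sI[OF dd(2)] mI by auto
        show "integrable Lm (\<lambda>x. kfun l x)" using kI l by simp
        show "AE x in Lm. l * w x - l * (\<bar>x\<bar> * indicator {-\<delta><..} x) - min 1 (x^2) / \<delta>^2 \<le> kfun l x"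
          using AEneg by eventually_elim (use kfun_P4 dd l in \<open>auto simp: w_def\<close>)
      qed
      also have "(\<integral>x. l * w x - l * (\<bar>x\<bar> * indicator {-\<delta><..} x) - min 1 (x^2) / \<delta>^2 \<partial>Lm) = l * Aint - l * B \<delta> - C"
        unfolding Aint_def B_def C_def M_def using wI sI[OF dd(2)] mI by (simp add: Bochner_Integration.integral_diff)
      finally have i: "l * Aint - l * B \<delta> - C \<le> (\<integral>x. kfun l x \<partial>Lm)" .
      have f1: "l * B \<delta> \<le> l * (d/2)" using dd l by (intro mult_left_mono) auto
      have f3: "\<sigma>^2/2*l^2 \<ge> 0" by simp
      have f4: "\<gamma> * l + l * Aint = d * l" unfolding d_def by (simp add: algebra_simps)
      have f5: "l * (d/2) = (d/2) * l" by simp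
      show ?thesis unfolding psi using i f1 f3 f4 f5 by linarith
    qed
    show ?thesis using final[where a="d/2" and B=C and Lz=0, OF L1] d0 by simp
  qed
qed

lemma si_Ioi_Ici:
  fixes f :: "real \<Rightarrow> real"
  assumes [measurable]: "f \<in> borel_measurable borel"
  shows "set_integrable lborel {0<..} f \<longleftrightarrow> set_integrable lborel {0..} f"
    and "(LINT x:{0<..}|lborel. f x) = (LINT x:{0..}|lborel. f x)"
proof -
  have ae: "AE x in lborel. indicator {0<..} x *\<^sub>R f x = indicator {0..} x *\<^sub>R f x"
    using AE_lborel_singleton[of "0::real"] by eventually_elim (auto simp: indicator_def)
  show "set_integrable lborel {0<..} f \<longleftrightarrow> set_integrable lborel {0..} f"
    unfolding set_integrable_def by (rule integrable_cong_AE) (use ae in auto)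
  show "(LINT x:{0<..}|lborel. f x) = (LINT x:{0..}|lborel. f x)"
    unfolding set_lebesgue_integral_def by (rule integral_cong_AE) (use ae in auto)
qed

lemma bdd_set_integrable:
  fixes f :: "real \<Rightarrow> real"
  assumes [measurable]: "f \<in> borel_measurable borel" and B: "\<And>y. y \<in> {a..b} \<Longrightarrow> \<bar>f y\<bar> \<le> B"
  shows "set_integrable lborel {a..b} f"
  unfolding set_integrable_def
proof (rule Bochner_Integration.integrable_bound)
  show "integrable lborel (\<lambda>y. B * indicator {a..b} y)"
    using emeasure_lborel_cbox_finite[of a b] by (intro integrable_mult_right integrable_real_indicator) auto
  show "(\<lambda>x. indicator {a..b} x *\<^sub>R f x) \<in> borel_measurable lborel" by simp
  show "AE x in lborel. norm (indicator {a..b} x *\<^sub>R f x) \<le> norm (B * indicator {a..b} x)"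
  proof (rule AE_I2)
    fix x
    show "norm (indicator {a..b} x *\<^sub>R f x) \<le> norm (B * indicator {a..b} x)"
    proof (cases "x \<in> {a..b}")
      case True then show ?thesis using B[OF True] by (simp add: indicator_def)
    next
      case False then have "indicator {a..b} x = (0::real)" by (simp add: indicator_def)
      then show ?thesis by simp
    qed
  qed
qed

lemma cont_bounded:
  fixes f :: "real \<Rightarrow> real"
  assumes "continuous_on {a..b} f"
  obtains B where "\<And>y. y \<in> {a..b} \<Longrightarrow> \<bar>f y\<bar> \<le> B"
proof -
  have "bounded (f ` {a..b})" by (intro compact_imp_bounded compact_continuous_image assms compact_Icc)
  then obtain B where "\<forall>y\<in>f ` {a..b}. norm y \<le> B" unfolding bounded_iff by blast
  then have "\<And>y. y \<in> {a..b} \<Longrightarrow> \<bar>f y\<bar> \<le> B" by auto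
  then show ?thesis by (rule that)
qed

lemma prim_cont:
  fixes G :: "real \<Rightarrow> real"
  assumes cG: "continuous_on UNIV G"
  shows "continuous_on UNIV (\<lambda>x. LBINT z=ereal 0..ereal x. G z)"
proof (intro continuous_at_imp_continuous_on ballI)
  fix x0 :: real
  define a where "a = min (x0 - 1) (-1)"
  define b where "b = max (x0 + 1) 1"
  have ab: "a \<le> 0" "0 \<le> b" "a \<le> x0" "x0 \<le> b" "a < x0" "x0 < b" unfolding a_def b_def by auto
  have "((\<lambda>u. LBINT y=ereal 0..ereal u. G y) has_vector_derivative G x0) (at x0 within {a..b})"
    by (rule interval_integral_FTC2) (use ab continuous_on_subset[OF cG] in auto)
  then have "((\<lambda>u. LBINT y=ereal 0..ereal u. G y) has_vector_derivative G x0) (at x0)"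
    using at_within_Icc_at[OF ab(5,6)] by simp
  then show "isCont (\<lambda>x. LBINT z=ereal 0..ereal x. G z) x0"
    by (rule has_vector_derivative_continuous)
qed

lemma alg_lemma:
  fixes a b e q :: real
  assumes "a \<noteq> 0" "b \<noteq> 0" "e \<noteq> 0" "a = b + q"
  shows "1 / a * (1 / e + q * (1 / e * (1 / b))) - 1 / e * (1 / b) = 0"
proof -
  have "1 / e + q * (1 / e * (1 / b)) = a / (e * b)" using assms by (simp add: field_simps)
  then show ?thesis using assms by simp
qed

theorem mainTheorem9:
  fixes \<gamma> \<sigma> :: real and Lm :: "real measure" and W :: "real \<Rightarrow> real \<Rightarrow> real"
    and p q :: real
  assumes "levy_measure_sn Lm"
    and "sn_not_monotone \<gamma> \<sigma> Lm"
    and "is_scale_family (laplace_exp \<gamma> \<sigma> Lm) W"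
    and "p \<ge> 0" and "p + q \<ge> 0"
  shows "(\<forall>x::real.
           (LBINT z=ereal 0..ereal x. W p (x - z) * HH (laplace_exp \<gamma> \<sigma> Lm) W p q z) =
           (LBINT z=ereal 0..ereal x. exp (Phi (laplace_exp \<gamma> \<sigma> Lm) p * (x - z)) * W (p + q) z))
       \<and> (\<forall>a x::real.
           HH (laplace_exp \<gamma> \<sigma> Lm) W p q x
             - q * (LBINT y=ereal a..ereal x. W p (x - y) * HH (laplace_exp \<gamma> \<sigma> Lm) W p q y) =
           exp (Phi (laplace_exp \<gamma> \<sigma> Lm) p * x)
             + q * (LBINT y=ereal 0..ereal a. W p (x - y) * HH (laplace_exp \<gamma> \<sigma> Lm) W p q y))"
proof -
  note Lm = assms(1) and nm = assms(2) and sc0 = assms(3) and p0 = assms(4) and pq = assms(5)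
  define \<psi> where "\<psi> = laplace_exp \<gamma> \<sigma> Lm"
  define \<Phi> where "\<Phi> = Phi \<psi> p"
  define Wp where "Wp = W p"
  define Wr where "Wr = W (p+q)"
  define H where "H = HH \<psi> W p q"
  have sc: "is_scale_family \<psi> W" using sc0 unfolding \<psi>_def .
  have W0: "W r y = 0" if "r \<ge> 0" "y < 0" for r y using sc that unfolding is_scale_family_def by blast
  have Wc: "continuous_on {0..} (W r)" if "r \<ge> 0" for r using sc that unfolding is_scale_family_def by blast
  have Wm: "W r \<in> borel_measurable borel" if r: "r \<ge> 0" for r
  proof -
    have "(\<lambda>y. indicator {0..} y *\<^sub>R W r y) \<in> borel_measurable borel"
      by (intro borel_measurable_continuous_on_indicator Wc r) auto
    moreover have "(\<lambda>y. indicator {0..} y *\<^sub>R W r y) = W r"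
      by (rule ext) (auto simp: indicator_def W0[OF r])
    ultimately show ?thesis by simp
  qed
  have WL: "set_integrable lborel {0..} (\<lambda>y. exp (- l * y) * W r y) \<and>
            (LINT y:{0..}|lborel. exp (- l * y) * W r y) = 1 / (\<psi> l - r)"
    if r: "r \<ge> 0" and l: "l > Phi \<psi> r" for r l
  proof -
    have "interval_lebesgue_integrable lborel 0 \<infinity> (\<lambda>y. exp (- l * y) * W r y) \<and>
        (LBINT y=0..\<infinity>. exp (- l * y) * W r y) = 1 / (\<psi> l - r)"
      using sc r l unfolding is_scale_family_def by blast
    moreover have "(\<lambda>y. exp (- l * y) * W r y) \<in> borel_measurable borel" using Wm[OF r] by measurable
    ultimately show ?thesis
      unfolding interval_lebesgue_integral_0_infty using si_Ioi_Ici by metis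
  qed
  have Wpm[measurable]: "Wp \<in> borel_measurable borel" unfolding Wp_def using Wm p0 by simp
  have Wrm[measurable]: "Wr \<in> borel_measurable borel" unfolding Wr_def using Wm pq by simp
  have cWp: "continuous_on {0..} Wp" unfolding Wp_def using Wc p0 by simp
  have cWr: "continuous_on {0..} Wr" unfolding Wr_def using Wc pq by simp
  have Wp0: "Wp y = 0" if "y < 0" for y unfolding Wp_def using W0 p0 that by simp
  have Wr0: "Wr y = 0" if "y < 0" for y unfolding Wr_def using W0 pq that by simp
  have cmax: "continuous_on UNIV (\<lambda>u. f (max 0 u))" if "continuous_on {0..} f" for f :: "real \<Rightarrow> real"
    by (rule continuous_on_compose2[OF that]) (auto intro: continuous_intros)
  have cWpm: "continuous_on UNIV (\<lambda>u. Wp (max 0 u))" by (rule cmax[OF cWp])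
  have cWrm: "continuous_on UNIV (\<lambda>u. Wr (max 0 u))" by (rule cmax[OF cWr])
  define J where "J x = (LBINT z=ereal 0..ereal x. exp (- \<Phi> * z) * Wr z)" for x
  have H_def': "H x = exp (\<Phi> * x) * (1 + q * J x)" for x
    unfolding H_def HH_def J_def \<Phi>_def Wr_def by simp
  define G where "G z = exp (- \<Phi> * z) * Wr (max 0 z)" for z
  have cG: "continuous_on UNIV G" unfolding G_def by (intro continuous_intros cWrm)
  have J_max: "J x = (LBINT z=ereal 0..ereal (max 0 x). G z)" for x
  proof (cases "x \<ge> 0")
    case True
    have "J x = (LBINT z=ereal 0..ereal x. G z)"
      unfolding J_def G_def by (rule interval_integral_cong) (use True in \<open>auto simp: einterval_iff max_def min_def\<close>)
    then show ?thesis using True by simp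
  next
    case False
    have "J x = (LBINT z=ereal 0..ereal x. 0)"
      unfolding J_def by (rule interval_integral_cong) (use False in \<open>auto simp: einterval_iff Wr0 min_def max_def\<close>)
    then show ?thesis using False by simp
  qed
  have cJ: "continuous_on UNIV J"
  proof -
    have "continuous_on UNIV (\<lambda>x. (LBINT z=ereal 0..ereal (max 0 x). G z))"
      by (rule continuous_on_compose2[OF prim_cont[OF cG]]) (auto intro: continuous_intros)
    then show ?thesis using J_max by simp
  qed
  have cH: "continuous_on UNIV H" unfolding H_def' by (intro continuous_intros cJ)
  have Hm[measurable]: "H \<in> borel_measurable borel" by (rule borel_measurable_continuous_onI[OF cH])
  define C1 where "C1 x = (LINT z|lborel. indicator {0..x} z * (exp (\<Phi> * (x - z)) * Wr z))" for x
  define C2 where "C2 x = (LINT z|lborel. indicator {0..x} z * (Wp (x - z) * H z))" for x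
  have C1_eq: "C1 x = exp (\<Phi> * x) * J x" if x: "x \<ge> 0" for x
  proof -
    have "C1 x = (LINT z:{0..x}|lborel. exp (\<Phi> * (x - z)) * Wr z)"
      unfolding C1_def set_lebesgue_integral_def by simp
    also have "\<dots> = (LBINT z=ereal 0..ereal x. exp (\<Phi> * (x - z)) * Wr z)"
      by (rule interval_integral_Icc[OF x, symmetric])
    also have "\<dots> = (LBINT z=ereal 0..ereal x. exp (\<Phi> * x) * (exp (- \<Phi> * z) * Wr z))"
      by (rule interval_integral_cong) (simp add: exp_add[symmetric] algebra_simps)
    also have "\<dots> = exp (\<Phi> * x) * J x" unfolding J_def by simp
    finally show ?thesis .
  qed
  have Hrep: "H x = exp (\<Phi> * x) + q * C1 x" if "x \<ge> 0" for x
    unfolding H_def' C1_eq[OF that] by (simp add: algebra_simps)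
  obtain L where L: "\<And>l. l \<ge> L \<Longrightarrow> \<psi> l > max p (p+q)"
    using psi_growth[OF Lm nm, of "max p (p+q)"] unfolding \<psi>_def by blast
  define l0 where "l0 = max L (max (Phi \<psi> p) (Phi \<psi> (p+q))) + 1"
  have lap0: "set_integrable lborel {0..} (\<lambda>x. exp(-l*x) * (C2 x - C1 x)) \<and>
              (LINT x:{0..}|lborel. exp(-l*x) * (C2 x - C1 x)) = 0" if l: "l \<ge> l0" for l
  proof -
    have lL: "l \<ge> L" and lp: "l > Phi \<psi> p" and lr: "l > Phi \<psi> (p+q)" using l unfolding l0_def by auto
    have lPhi: "l - \<Phi> > 0" using lp unfolding \<Phi>_def by simp
    have A0: "\<psi> l - p \<noteq> 0" and B0: "\<psi> l - (p+q) \<noteq> 0" using L[OF lL] by auto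
    have Wpi: "set_integrable lborel {0..} (\<lambda>x. exp(-l*x) * Wp x)"
      and Wpv: "(LINT x:{0..}|lborel. exp(-l*x) * Wp x) = 1 / (\<psi> l - p)"
      using WL[OF p0 lp] unfolding Wp_def by auto
    have Wri: "set_integrable lborel {0..} (\<lambda>x. exp(-l*x) * Wr x)"
      and Wrv: "(LINT x:{0..}|lborel. exp(-l*x) * Wr x) = 1 / (\<psi> l - (p+q))"
      using WL[OF pq lr] unfolding Wr_def by auto
    have ee: "(\<lambda>x. exp(-l*x) * exp (\<Phi> * x)) = (\<lambda>x. exp (-(l-\<Phi>)*x))"
      by (rule ext) (simp add: exp_add[symmetric] algebra_simps)
    have Ei: "set_integrable lborel {0..} (\<lambda>x. exp(-l*x) * exp (\<Phi> * x))"
      and Ev: "(LINT x:{0..}|lborel. exp(-l*x) * exp (\<Phi> * x)) = 1 / (l - \<Phi>)"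
      unfolding ee using lap_exp[OF lPhi] by auto
    have C1i: "set_integrable lborel {0..} (\<lambda>x. exp(-l*x) * C1 x)"
      unfolding C1_def by (rule laplace_conv(1)[where f="\<lambda>u. exp (\<Phi> * u)"]) (use Ei Wri in auto)
    have C1v: "(LINT x:{0..}|lborel. exp(-l*x) * C1 x) = 1 / (l - \<Phi>) * (1 / (\<psi> l - (p+q)))"
      unfolding C1_def Ev[symmetric] Wrv[symmetric]
      by (rule laplace_conv(2)[where f="\<lambda>u. exp (\<Phi> * u)"]) (use Ei Wri in auto)
    have Heq: "exp(-l*x) * H x = exp(-l*x) * exp (\<Phi> * x) + q * (exp(-l*x) * C1 x)" if "x \<in> {0..}" for x
      using Hrep[of x] that by (simp add: algebra_simps)
    have Hi: "set_integrable lborel {0..} (\<lambda>x. exp(-l*x) * H x)"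
    proof -
      have "set_integrable lborel {0..} (\<lambda>x. exp(-l*x) * exp (\<Phi> * x) + q * (exp(-l*x) * C1 x))"
        using Ei C1i by auto
      moreover have "set_integrable lborel {0..} (\<lambda>x. exp(-l*x) * H x) = set_integrable lborel {0..} (\<lambda>x. exp(-l*x) * exp (\<Phi> * x) + q * (exp(-l*x) * C1 x))"
        by (rule set_integrable_cong[OF refl refl]) (rule Heq)
      ultimately show ?thesis by simp
    qed
    have Hv: "(LINT x:{0..}|lborel. exp(-l*x) * H x) = 1 / (l - \<Phi>) + q * (1 / (l - \<Phi>) * (1 / (\<psi> l - (p+q))))"
    proof -
      have "(LINT x:{0..}|lborel. exp(-l*x) * H x) = (LINT x:{0..}|lborel. exp(-l*x) * exp (\<Phi> * x) + q * (exp(-l*x) * C1 x))"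
        using Heq by (intro set_lebesgue_integral_cong) auto
      also have "\<dots> = (LINT x:{0..}|lborel. exp(-l*x) * exp (\<Phi> * x)) + q * (LINT x:{0..}|lborel. exp(-l*x) * C1 x)"
        using Ei C1i by (simp add: set_integral_add)
      finally show ?thesis unfolding Ev C1v .
    qed
    have C2i: "set_integrable lborel {0..} (\<lambda>x. exp(-l*x) * C2 x)"
      unfolding C2_def by (rule laplace_conv(1)) (use Wpi Hi in auto)
    have C2v: "(LINT x:{0..}|lborel. exp(-l*x) * C2 x) = 1 / (\<psi> l - p) * (1 / (l - \<Phi>) + q * (1 / (l - \<Phi>) * (1 / (\<psi> l - (p+q)))))"
      unfolding C2_def Wpv[symmetric] Hv[symmetric]
      by (rule laplace_conv(2)) (use Wpi Hi in auto)
    have dd: "(\<lambda>x. exp(-l*x) * (C2 x - C1 x)) = (\<lambda>x. exp(-l*x) * C2 x - exp(-l*x) * C1 x)"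
      by (simp add: right_diff_distrib)
    have alg: "1 / (\<psi> l - p) * (1 / (l - \<Phi>) + q * (1 / (l - \<Phi>) * (1 / (\<psi> l - (p+q)))))
        - 1 / (l - \<Phi>) * (1 / (\<psi> l - (p+q))) = 0"
      using alg_lemma[OF A0 B0, of "l - \<Phi>" q] lPhi by simp
    show ?thesis unfolding dd using C1i C2i C1v C2v alg by (simp add: set_integral_diff)
  qed
  define F1 where "F1 x z = exp (\<Phi> * (x - z)) * Wr (max 0 z)" for x z
  define F2 where "F2 x z = Wp (max 0 (x - z)) * H z" for x z
  have cF1: "continuous_on UNIV (\<lambda>(x,z). F1 x z)"
  proof -
    have "continuous_on UNIV (\<lambda>pr::real\<times>real. Wr (max 0 (snd pr)))"
      by (rule continuous_on_compose2[OF cWrm]) (auto intro: continuous_intros)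
    then show ?thesis unfolding F1_def case_prod_beta by (intro continuous_intros)
  qed
  have cF2: "continuous_on UNIV (\<lambda>(x,z). F2 x z)"
  proof -
    have "continuous_on UNIV (\<lambda>pr::real\<times>real. fst pr - snd pr)"
      by (intro continuous_on_diff continuous_on_fst continuous_on_snd continuous_on_id)
    then have "continuous_on UNIV (\<lambda>pr::real\<times>real. Wp (max 0 (fst pr - snd pr)))"
      by (rule continuous_on_compose2[OF cWpm]) auto
    moreover have "continuous_on UNIV (\<lambda>pr::real\<times>real. H (snd pr))"
      by (rule continuous_on_compose2[OF cH]) (auto intro: continuous_intros)
    ultimately show ?thesis unfolding F2_def case_prod_beta by (intro continuous_intros)
  qed
  have cF1x: "continuous_on S (F1 x)" for x S
    unfolding F1_def by (intro continuous_intros continuous_on_subset[OF cWrm]) auto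
  have cF2x: "continuous_on S (F2 x)" for x S
  proof -
    have "continuous_on UNIV (\<lambda>z. Wp (max 0 (x - z)))"
      by (rule continuous_on_compose2[OF cWpm]) (auto intro: continuous_intros)
    then show ?thesis unfolding F2_def
      by (intro continuous_intros continuous_on_subset[OF cH]) (auto intro: continuous_on_subset)
  qed
  have C1_int: "C1 x = integral {0..x} (F1 x)" if x: "x \<ge> 0" for x
  proof -
    have "C1 x = (LINT z:{0..x}|lborel. F1 x z)"
      unfolding C1_def set_lebesgue_integral_def F1_def
      by (rule Bochner_Integration.integral_cong) (auto simp: indicator_def max_def)
    also have "\<dots> = integral {0..x} (F1 x)"
      by (rule set_borel_integral_eq_integral(2)[OF borel_integrable_atLeastAtMost'[OF cF1x]])
    finally show ?thesis .
  qed
  have C2_int: "C2 x = integral {0..x} (F2 x)" if x: "x \<ge> 0" for x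
  proof -
    have "C2 x = (LINT z:{0..x}|lborel. F2 x z)"
      unfolding C2_def set_lebesgue_integral_def F2_def
      by (rule Bochner_Integration.integral_cong) (auto simp: indicator_def max_def)
    also have "\<dots> = integral {0..x} (F2 x)"
      by (rule set_borel_integral_eq_integral(2)[OF borel_integrable_atLeastAtMost'[OF cF2x]])
    finally show ?thesis .
  qed
  have cD: "continuous_on {0..} (\<lambda>x. C2 x - C1 x)"
  proof -
    have "continuous_on {0..} (\<lambda>x. integral {0..x} (F2 x) - integral {0..x} (F1 x))"
      by (intro continuous_on_diff conv_cont cF1 cF2)
    moreover have "\<And>x. x \<in> {0..} \<Longrightarrow> integral {0..x} (F2 x) - integral {0..x} (F1 x) = C2 x - C1 x"
      using C1_int C2_int by simp
    ultimately show ?thesis using continuous_on_cong[OF refl] by (metis (no_types, lifting))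
  qed
  have D0: "C2 y - C1 y = 0" if y: "y > 0" for y
  proof (rule laplace_unique[OF cD _ _ y, of l0])
    fix n :: nat
    have "l0 + real n \<ge> l0" by simp
    note lap0[OF this]
    then show "set_integrable lborel {0..} (\<lambda>x. exp (- (l0 + real n) * x) * (C2 x - C1 x))"
      and "(LINT x:{0..}|lborel. exp (- (l0 + real n) * x) * (C2 x - C1 x)) = 0" by simp_all
  qed
  have part1: "(LBINT z=ereal 0..ereal x. Wp (x - z) * H z) = (LBINT z=ereal 0..ereal x. exp (\<Phi> * (x - z)) * Wr z)" for x
  proof (cases "x > 0")
    case True
    have "(LBINT z=ereal 0..ereal x. Wp (x - z) * H z) = C2 x"
      unfolding interval_integral_Icc[OF less_imp_le[OF True]] C2_def set_lebesgue_integral_def by simp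
    also have "\<dots> = C1 x" using D0[OF True] by simp
    also have "\<dots> = (LBINT z=ereal 0..ereal x. exp (\<Phi> * (x - z)) * Wr z)"
      unfolding interval_integral_Icc[OF less_imp_le[OF True]] C1_def set_lebesgue_integral_def by simp
    finally show ?thesis .
  next
    case False
    show ?thesis
    proof (cases "x = 0")
      case True then show ?thesis by simp
    next
      case False
      with \<open>\<not> x > 0\<close> have x: "x < 0" by simp
      have "(LBINT z=ereal 0..ereal x. Wp (x - z) * H z) = (LBINT z=ereal 0..ereal x. 0)"
        by (rule interval_integral_cong) (use x in \<open>auto simp: einterval_iff min_def max_def Wp0\<close>)
      moreover have "(LBINT z=ereal 0..ereal x. exp (\<Phi> * (x - z)) * Wr z) = (LBINT z=ereal 0..ereal x. 0)"
        by (rule interval_integral_cong) (use x in \<open>auto simp: einterval_iff min_def max_def Wr0\<close>)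
      ultimately show ?thesis by simp
    qed
  qed
  have part2: "H x - q * (LBINT y=ereal a..ereal x. Wp (x - y) * H y) =
      exp (\<Phi> * x) + q * (LBINT y=ereal 0..ereal a. Wp (x - y) * H y)" for a x
  proof -
    define k where "k y = Wp (x - y) * H y" for y
    have km[measurable]: "k \<in> borel_measurable borel" unfolding k_def by measurable
    define m where "m = min 0 (min a x)"
    define M where "M = max 0 (max a x)"
    have mM: "m \<le> M" unfolding m_def M_def by simp
    obtain BW where BW: "\<And>y. y \<in> {0..\<bar>x - m\<bar>} \<Longrightarrow> \<bar>Wp y\<bar> \<le> BW"
      using cont_bounded[OF continuous_on_subset[OF cWp]] by (metis atLeastAtMost_iff atLeast_iff subsetI)
    obtain BH where BH: "\<And>y. y \<in> {m..M} \<Longrightarrow> \<bar>H y\<bar> \<le> BH"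
      using cont_bounded[OF continuous_on_subset[OF cH]] by (metis subset_UNIV)
    have kb: "\<bar>k y\<bar> \<le> \<bar>BW\<bar> * \<bar>BH\<bar>" if y: "y \<in> {m..M}" for y
    proof -
      have w: "\<bar>Wp (x - y)\<bar> \<le> \<bar>BW\<bar>"
      proof (cases "x - y < 0")
        case True then show ?thesis using Wp0 by simp
      next
        case False
        then have "x - y \<in> {0..\<bar>x - m\<bar>}" using y by auto
        then show ?thesis using BW by (meson abs_ge_self order_trans)
      qed
      have h: "\<bar>H y\<bar> \<le> \<bar>BH\<bar>" using BH[OF y] by simp
      show ?thesis unfolding k_def abs_mult using w h by (intro mult_mono) auto
    qed
    have ki: "set_integrable lborel {m..M} k" by (rule bdd_set_integrable[OF km kb])
    have kii: "interval_lebesgue_integrable lborel (ereal m) (ereal M) k"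
      unfolding interval_lebesgue_integrable_def using mM
      by (auto intro: set_integrable_subset[OF ki] simp: einterval_iff)
    have sum: "(LBINT y=ereal 0..ereal a. k y) + (LBINT y=ereal a..ereal x. k y) = (LBINT y=ereal 0..ereal x. k y)"
    proof (rule interval_integral_sum)
      have "min (ereal 0) (min (ereal a) (ereal x)) = ereal m" "max (ereal 0) (max (ereal a) (ereal x)) = ereal M"
        unfolding m_def M_def by (auto simp: min_def max_def)
      then show "interval_lebesgue_integrable lborel (min (ereal 0) (min (ereal a) (ereal x))) (max (ereal 0) (max (ereal a) (ereal x))) k"
        using kii by simp
    qed
    have R: "(LBINT z=ereal 0..ereal x. exp (\<Phi> * (x - z)) * Wr z) = exp (\<Phi> * x) * J x"
    proof -
      have "(LBINT z=ereal 0..ereal x. exp (\<Phi> * (x - z)) * Wr z) = (LBINT z=ereal 0..ereal x. exp (\<Phi> * x) * (exp (- \<Phi> * z) * Wr z))"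
        by (rule interval_integral_cong) (simp add: exp_add[symmetric] algebra_simps)
      also have "\<dots> = exp (\<Phi> * x) * J x" unfolding J_def by simp
      finally show ?thesis .
    qed
    have "(LBINT y=ereal 0..ereal x. k y) = exp (\<Phi> * x) * J x" using part1[of x] R unfolding k_def by simp
    then have S2: "(LBINT y=ereal a..ereal x. k y) = exp (\<Phi> * x) * J x - (LBINT y=ereal 0..ereal a. k y)"
      using sum by linarith
    show ?thesis unfolding k_def[symmetric] H_def'[of x] S2 by (simp add: algebra_simps)
  qed
  show ?thesis
    using part1 part2 unfolding H_def Wp_def Wr_def \<Phi>_def \<psi>_def by blast
qed

end
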